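(* Consider a nonempty configuration with largest nonempty level $\lambda$. Define $Y_\lambda=\sum_{r\ge0}SS_{\lambda-r}2^{-r+1-b}$, and for $r=0,1,\dots,b$ let $H_r=\lfloor SS_{\lambda-r}/2^b\rfloor$ and $E=\sum_{r=0}^b\lfloor H_r2^{-r+1}\rfloor$. Then $E\le Y_\lambda<E+b+7$, and $Y_\lambda\ge 1$.
   Context: Fix an integer $b\ge 2$. There is a set $\mathcal L$ of $N$ levels, which are consecutive integers. Each level $\ell$ holds a finite (possibly empty) multiset of normalized significands, each an integer in $[2^{b-1},2^b)$. Let $z$ be the total number of stored significands over all levels; assume $z<2^b$ (hence every $SS_\ell<2^{2b}$). For each level, $SS_\ell$ is the sum of its significands (so $SS_\ell=0$ iff the level is empty); set $SS_\ell=0$ for integers $\ell\notin\mathcal L$. The configuration is nonempty if $z\ge1$. *)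

theory Defs
  imports Complex_Main "HOL-Library.Multiset"
begin

text \<open>A configuration: the set of levels is L = {lo ..< lo + N} (N consecutive integers),
  and M l is the multiset of normalized significands stored at level l.\<close>

definition levels :: "int \<Rightarrow> nat \<Rightarrow> int set" where
  "levels lo N = {lo ..< lo + int N}"

definition SS :: "int \<Rightarrow> nat \<Rightarrow> (int \<Rightarrow> nat multiset) \<Rightarrow> int \<Rightarrow> nat" where
  "SS lo N M l = (if l \<in> levels lo N then sum_mset (M l) else 0)"

definition valid_config :: "nat \<Rightarrow> int \<Rightarrow> nat \<Rightarrow> (int \<Rightarrow> nat multiset) \<Rightarrow> bool" where
  "valid_config b lo N M \<longleftrightarrow>
     (\<forall>l \<in> levels lo N. \<forall>x \<in># M l. 2 ^ (b - 1) \<le> x \<and> x < 2 ^ b)"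

definition total_count :: "int \<Rightarrow> nat \<Rightarrow> (int \<Rightarrow> nat multiset) \<Rightarrow> nat" where
  "total_count lo N M = (\<Sum>l \<in> levels lo N. size (M l))"

definition top_level :: "int \<Rightarrow> nat \<Rightarrow> (int \<Rightarrow> nat multiset) \<Rightarrow> int" where
  "top_level lo N M = Max {l \<in> levels lo N. M l \<noteq> {#}}"

end

theory Submission
  imports Defs
begin

lemma geo_eq: "m \<le> n \<Longrightarrow> (\<Sum>r\<in>{m..<n}. (1::real)/2^r) = 2/2^m - 2/2^n"
proof (induction n rule: dec_induct)
  case base then show ?case by simp
next
  case (step k)
  have "(\<Sum>r\<in>{m..<Suc k}. (1::real)/2^r) = (\<Sum>r\<in>{m..<k}. (1::real)/2^r) + 1/2^k"
    using step.hyps by simp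
  also have "\<dots> = 2/2^m - 2/2^k + 1/2^k" using step.IH by simp
  also have "\<dots> = 2/2^m - 2/2^(Suc k)" by (simp add: field_simps)
  finally show ?case .
qed

lemma geo_le: "(\<Sum>r\<in>{m..<n}. (1::real)/2^r) \<le> 2/2^m"
proof (cases "m \<le> n")
  case True then show ?thesis using geo_eq[OF True] by simp
next
  case False then show ?thesis by simp
qed

lemma mset_le_sum: "(x::nat) \<in># A \<Longrightarrow> x \<le> sum_mset A"
  by (metis le_add1 multi_member_split sum_mset.add_mset)

lemma mset_sum_bound: "(\<forall>x \<in># A. x < (c::nat)) \<Longrightarrow> sum_mset A \<le> size A * c"
proof -
  assume h: "\<forall>x \<in># A. x < c"
  have "sum_mset (image_mset (\<lambda>x. x) A) \<le> sum_mset (image_mset (\<lambda>x. c) A)"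
    by (rule sum_mset_mono) (use h in auto)
  then show ?thesis by simp
qed

lemma powr_conv: "(2::real) powr (- real r + 1 - real b) = 2 / 2^(r+b)"
proof -
  have "(2::real) powr (- real r + 1 - real b) = 2 powr 1 / 2 powr (real (r+b))"
  proof -
    have "- real r + 1 - real b = 1 - real (r+b)" by simp
    then show ?thesis by (simp only: powr_diff)
  qed
  also have "\<dots> = 2 / 2^(r+b)" 
    using powr_realpow[of 2 "r+b"] by simp
  finally show ?thesis .
qed

lemma powr_conv2: "(2::real) powr (- real r + 1) = 2 / 2^r"
  using powr_conv[of r 0] by simp

theorem mainTheorem8:
  fixes b :: nat and lo :: int and N :: nat and M :: "int \<Rightarrow> nat multiset"
    and lam :: int and Y :: real and H :: "nat \<Rightarrow> nat" and E :: int
  assumes hb: "b \<ge> 2"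
    and hvalid: "valid_config b lo N M"
    and hz: "total_count lo N M < 2 ^ b"
    and hne: "total_count lo N M \<ge> 1"
    and hlam: "lam = top_level lo N M"
    and hY: "Y = (\<Sum>r. real (SS lo N M (lam - int r)) * 2 powr (- real r + 1 - real b))"
    and hH: "\<forall>r. H r = SS lo N M (lam - int r) div 2 ^ b"
    and hE: "E = (\<Sum>r = 0..b. \<lfloor>real (H r) * 2 powr (- real r + 1)\<rfloor>)"
  shows "real_of_int E \<le> Y \<and> Y < real_of_int E + real b + 7 \<and> Y \<ge> 1"
proof -
  define S where "S = {l \<in> levels lo N. M l \<noteq> {#}}"
  have finL: "finite (levels lo N)" by (simp add: levels_def)
  have finS: "finite S" unfolding S_def using finL by simp
  have "S \<noteq> {}"
  proof
    assume "S = {}"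
    then have "\<forall>l\<in>levels lo N. size (M l) = 0" unfolding S_def by auto
    then have "total_count lo N M = 0" unfolding total_count_def by simp
    then show False using hne by simp
  qed
  then have lamS: "lam \<in> S" using finS hlam unfolding top_level_def S_def[symmetric] by (simp add: Max_in)
  have lamup: "\<And>l. l \<in> S \<Longrightarrow> l \<le> lam" using finS hlam unfolding top_level_def S_def[symmetric] by simp
  have lamL: "lam \<in> levels lo N" and lamne: "M lam \<noteq> {#}" using lamS unfolding S_def by auto
  have lamlo: "lo \<le> lam" using lamL unfolding levels_def by simp
  define s where "s r = real (SS lo N M (lam - int r))" for r
  define f where "f r = s r * 2 powr (- real r + 1 - real b)" for r
  have f_eq: "f r = 2 * s r / 2^(r+b)" for r unfolding f_def powr_conv by simp
  have s_nn: "s r \<ge> 0" for r unfolding s_def by simp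
  have f_nn: "f r \<ge> 0" for r unfolding f_eq using s_nn by simp
  have SSb: "SS lo N M l < 2^b * 2^b" for l
  proof (cases "l \<in> levels lo N")
    case True
    have "\<forall>x\<in># M l. x < 2^b" using hvalid True unfolding valid_config_def by auto
    then have "sum_mset (M l) \<le> size (M l) * 2^b" by (rule mset_sum_bound)
    moreover have "size (M l) \<le> total_count lo N M"
      unfolding total_count_def by (rule member_le_sum[OF True _ finL]) simp
    ultimately have "sum_mset (M l) \<le> total_count lo N M * 2^b"
      by (meson le_trans mult_le_mono1)
    also have "\<dots> < 2^b * 2^b" using hz by simp
    finally show ?thesis using True unfolding SS_def by simp
  next
    case False then show ?thesis unfolding SS_def by simp
  qed
  define K where "K = nat (lam - lo) + 1"
  define T where "T = b + 1 + K"
  have f0: "f r = 0" if "r \<notin> {..<T}" for r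
  proof -
    have "lam - int r \<notin> levels lo N" using that unfolding T_def K_def levels_def by auto
    then show ?thesis unfolding f_def s_def SS_def by simp
  qed
  have "f sums (\<Sum>r\<in>{..<T}. f r)" by (rule sums_finite) (use f0 in auto)
  then have Yeq: "Y = (\<Sum>r\<in>{..<T}. f r)" unfolding hY f_def s_def by (simp add: sums_iff)
  have split: "(\<Sum>r\<in>{..<T}. f r) = (\<Sum>r\<in>{0..b}. f r) + (\<Sum>r\<in>{b+1..<T}. f r)"
  proof -
    have "(\<Sum>r\<in>{0..<b+1}. f r) + (\<Sum>r\<in>{b+1..<T}. f r) = (\<Sum>r\<in>{0..<T}. f r)"
      by (rule sum.atLeastLessThan_concat) (auto simp: T_def)
    then show ?thesis by (simp add: atLeast0LessThan atLeastLessThanSuc_atLeastAtMost)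
  qed
  define g where "g r = real_of_int \<lfloor>real (H r) * 2 powr (- real r + 1)\<rfloor>" for r
  have Eeq: "real_of_int E = (\<Sum>r\<in>{0..b}. g r)" unfolding hE g_def by simp
  have Hb: "2^b * H r \<le> SS lo N M (lam - int r) \<and> SS lo N M (lam - int r) < 2^b * (H r + 1)" for r
  proof -
    let ?x = "SS lo N M (lam - int r)"
    have e: "?x = 2^b * H r + ?x mod 2^b" using hH div_mult_mod_eq[of ?x "2^b"] by (simp add: mult.commute)
    have m: "?x mod 2^b < 2^b" by simp
    have "2^b * (H r + 1) = 2^b * H r + 2^b" by (simp add: distrib_left)
    then show ?thesis using e m by linarith
  qed
  have per: "g r \<le> f r \<and> f r < g r + 1 + 2/2^r" for r
  proof -
    have A0: "real (2^b * H r) \<le> real (SS lo N M (lam - int r))" using Hb[of r] by (simp only: of_nat_le_iff)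
    have B0: "real (SS lo N M (lam - int r)) < real (2^b * (H r + 1))" using Hb[of r] by (simp only: of_nat_less_iff)
    have A: "2^b * real (H r) \<le> s r" using A0 unfolding s_def by simp
    have B: "s r < 2^b * (real (H r) + 1)" using B0 unfolding s_def by (simp add: distrib_left)
    have hh: "real (H r) * 2 powr (- real r + 1) = 2 * real (H r) / 2^r" unfolding powr_conv2 by simp
    have g1: "g r \<le> 2 * real (H r) / 2^r" and g2: "2 * real (H r) / 2^r < g r + 1"
      unfolding g_def hh by linarith+
    have "2 * real (H r) / 2^r \<le> f r"
    proof -
      have "2 * real (H r) / 2^r = 2 * (2^b * real (H r)) / 2^(r+b)" by (simp add: power_add)
      also have "\<dots> \<le> 2 * s r / 2^(r+b)" using A by (simp add: divide_right_mono)
      finally show ?thesis unfolding f_eq .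
    qed
    moreover have "f r < 2 * real (H r) / 2^r + 2/2^r"
    proof -
      have "f r = 2 * s r / 2^(r+b)" by (rule f_eq)
      also have "\<dots> < 2 * (2^b * (real (H r) + 1)) / 2^(r+b)" using B by (simp add: divide_strict_right_mono)
      also have "\<dots> = 2 * real (H r) / 2^r + 2/2^r" by (simp add: power_add field_simps)
      finally show ?thesis .
    qed
    ultimately show ?thesis using g1 g2 by linarith
  qed
  have tailnn: "(\<Sum>r\<in>{b+1..<T}. f r) \<ge> 0" using f_nn by (simp add: sum_nonneg)
  have part1: "(\<Sum>r\<in>{0..b}. g r) \<le> (\<Sum>r\<in>{0..b}. f r)" using per by (simp add: sum_mono)
  have part2: "(\<Sum>r\<in>{0..b}. f r) < (\<Sum>r\<in>{0..b}. g r + 1 + 2/2^r)"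
    by (rule sum_strict_mono) (use per in auto)
  have geo1: "(\<Sum>r\<in>{0..b}. (2::real)/2^r) \<le> 4"
  proof -
    have "(\<Sum>r\<in>{0..b}. (2::real)/2^r) = 2 * (\<Sum>r\<in>{0..<b+1}. 1/2^r)"
      by (simp add: sum_distrib_left atLeastLessThanSuc_atLeastAtMost)
    also have "\<dots> \<le> 2 * (2/2^0)" using geo_le[of 0 "b+1"] by simp
    finally show ?thesis by simp
  qed
  have part2': "(\<Sum>r\<in>{0..b}. g r + 1 + 2/2^r) \<le> (\<Sum>r\<in>{0..b}. g r) + real b + 5"
    using geo1 by (simp add: sum.distrib)
  have tail: "(\<Sum>r\<in>{b+1..<T}. f r) \<le> 2"
  proof -
    have "(\<Sum>r\<in>{b+1..<T}. f r) \<le> (\<Sum>r\<in>{b+1..<T}. 2^(b+1) * (1/2^r))"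
    proof (rule sum_mono)
      fix r
      have "real (SS lo N M (lam - int r)) < real (2^b * 2^b)" using SSb by (simp only: of_nat_less_iff)
      then have "s r < 2^b * 2^b" unfolding s_def by simp
      then have "f r \<le> 2 * (2^b * 2^b) / 2^(r+b)" unfolding f_eq by (simp add: divide_right_mono)
      also have "\<dots> = 2^(b+1) * (1/2^r)" by (simp add: power_add field_simps)
      finally show "f r \<le> 2^(b+1) * (1/2^r)" .
    qed
    also have "\<dots> = 2^(b+1) * (\<Sum>r\<in>{b+1..<T}. 1/2^r)" by (simp add: sum_distrib_left)
    also have "\<dots> \<le> 2^(b+1) * (2/2^(b+1))" using geo_le[of "b+1" T] by (intro mult_left_mono) simp_all
    finally show ?thesis by simp
  qed
  have Y1: "Y \<ge> 1"
  proof -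
    obtain x where x: "x \<in># M lam" using lamne by blast
    have "2^(b-1) \<le> x" using hvalid lamL x unfolding valid_config_def by auto
    also have "x \<le> SS lo N M lam" using mset_le_sum[OF x] lamL unfolding SS_def by simp
    finally have "real (2^(b-1)) \<le> real (SS lo N M lam)" by (simp only: of_nat_le_iff)
    then have "(2::real)^(b-1) \<le> s 0" unfolding s_def by simp
    have "(2::real)^b = 2 * 2^(b-1)" using hb by (cases b) auto
    then have "1 \<le> f 0" unfolding f_eq using \<open>2^(b-1) \<le> s 0\<close> by simp
    also have "f 0 \<le> (\<Sum>r\<in>{..<T}. f r)"
      by (rule member_le_sum) (use f_nn T_def in auto)
    finally show ?thesis using Yeq by simp
  qed
  show ?thesis using Yeq split Eeq part1 part2 part2' tail tailnn Y1 by linarith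
qed

end
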